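(* Let $a,b$ be positive integers and $c$ an integer with $-b<c<a$, and suppose that $E_{(-b,c,a)}^{(\infty,\infty,\infty)}=\bigoplus_{r\in\mathbb{Z}}A_r$ is of full support. Then for every even integer $r$, the component $A_r$ contains infinitely many monomials of even length with pairwise disjoint supports.
   Context: $E$ is the Grassmann algebra of an infinite-dimensional vector space with basis $e_1,e_2,\dots$; monomials are $1$ and $e_{i_1}\cdots e_{i_k}$ with $i_1<\dots<i_k$, of length $k$ and support $\{e_{i_1},\dots,e_{i_k}\}$. For pairwise distinct integers $r_1,r_2,r_3$, $E_{(r_1,r_2,r_3)}^{(\infty,\infty,\infty)}=\bigoplus_rA_r$ is the $\mathbb{Z}$-grading obtained by splitting $\{e_i\}$ into three disjoint infinite sets, giving elements of the $j$-th set degree $r_j$ and monomials the sum of the degrees of their factors. Full support means $A_r\ne0$ for every $r\in\mathbb{Z}$. *)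

theory Defs
  imports Main
begin

text \<open>The Grassmann algebra E over a field 'k, with basis e_i (i :: nat), is spanned by the
monomials e_{i_1}...e_{i_k}, i_1 < ... < i_k, which we identify with their supports, i.e. finite
sets of indices {i_1,...,i_k} (the empty set being the monomial 1). As a vector space, an element
of E is a finitely supported family of coefficients indexed by monomials.\<close>

definition grassmann :: "(nat set \<Rightarrow> 'k::field) set" where
  "grassmann = {x. finite {M. x M \<noteq> 0} \<and> (\<forall>M. x M \<noteq> 0 \<longrightarrow> finite M)}"

definition monomial :: "nat set \<Rightarrow> (nat set \<Rightarrow> 'k::field)" where
  "monomial M = (\<lambda>N. if N = M then 1 else 0)"

definition mono_length :: "nat set \<Rightarrow> nat" where
  "mono_length M = card M"

definition mono_deg :: "(nat \<Rightarrow> int) \<Rightarrow> nat set \<Rightarrow> int" where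
  "mono_deg d M = (\<Sum>i\<in>M. d i)"

text \<open>Degree assignment of E^{(\<infinity>,\<infinity>,\<infinity>)}_{(r1,r2,r3)} for the splitting S1, S2, S3
of the generators: generators in S_j have degree r_j.\<close>
definition split_deg :: "nat set \<Rightarrow> nat set \<Rightarrow> nat set \<Rightarrow> int \<Rightarrow> int \<Rightarrow> int \<Rightarrow> nat \<Rightarrow> int" where
  "split_deg S1 S2 S3 r1 r2 r3 i = (if i \<in> S1 then r1 else if i \<in> S2 then r2 else r3)"

definition three_infinite_split :: "nat set \<Rightarrow> nat set \<Rightarrow> nat set \<Rightarrow> bool" where
  "three_infinite_split S1 S2 S3 \<longleftrightarrow>
     S1 \<union> S2 \<union> S3 = UNIV \<and> S1 \<inter> S2 = {} \<and> S1 \<inter> S3 = {} \<and> S2 \<inter> S3 = {} \<and>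
     infinite S1 \<and> infinite S2 \<and> infinite S3"

definition hcomp :: "(nat \<Rightarrow> int) \<Rightarrow> int \<Rightarrow> (nat set \<Rightarrow> 'k::field) set" where
  "hcomp d r = {x \<in> grassmann. \<forall>M. x M \<noteq> 0 \<longrightarrow> mono_deg d M = r}"

definition full_support :: "(int \<Rightarrow> (nat set \<Rightarrow> 'k::field) set) \<Rightarrow> bool" where
  "full_support A \<longleftrightarrow> (\<forall>r. A r \<noteq> {(\<lambda>_. 0)})"

end

theory Submission
  imports Defs
begin

lemma deg_count:
  assumes sp: "three_infinite_split S1 S2 S3" and fin: "finite M"
  shows "mono_deg (split_deg S1 S2 S3 x y z) M
     = x * int (card (M \<inter> S1)) + y * int (card (M \<inter> S2)) + z * int (card (M \<inter> S3))
   \<and> card M = card (M \<inter> S1) + card (M \<inter> S2) + card (M \<inter> S3)"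
proof -
  have U: "S1 \<union> S2 \<union> S3 = UNIV" and d12: "S1 \<inter> S2 = {}" and d13: "S1 \<inter> S3 = {}"
    and d23: "S2 \<inter> S3 = {}" using sp unfolding three_infinite_split_def by auto
  have Meq: "M = (M \<inter> S1) \<union> ((M \<inter> S2) \<union> (M \<inter> S3))" using U by auto
  have dj1: "(M \<inter> S1) \<inter> ((M \<inter> S2) \<union> (M \<inter> S3)) = {}" using d12 d13 by auto
  have dj2: "(M \<inter> S2) \<inter> (M \<inter> S3) = {}" using d23 by auto
  let ?d = "split_deg S1 S2 S3 x y z"
  have s1: "sum ?d (M \<inter> S1) = x * int (card (M \<inter> S1))"
    by (simp add: split_deg_def)
  have s2: "sum ?d (M \<inter> S2) = y * int (card (M \<inter> S2))"
  proof -
    have "sum ?d (M \<inter> S2) = sum (\<lambda>_. y) (M \<inter> S2)"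
      by (rule sum.cong) (use d12 in \<open>auto simp: split_deg_def\<close>)
    then show ?thesis by (simp add: mult.commute)
  qed
  have s3: "sum ?d (M \<inter> S3) = z * int (card (M \<inter> S3))"
  proof -
    have "sum ?d (M \<inter> S3) = sum (\<lambda>_. z) (M \<inter> S3)"
      by (rule sum.cong) (use d13 d23 in \<open>auto simp: split_deg_def\<close>)
    then show ?thesis by (simp add: mult.commute)
  qed
  have "sum ?d M = sum ?d (M \<inter> S1) + (sum ?d (M \<inter> S2) + sum ?d (M \<inter> S3))"
    by (subst Meq, subst sum.union_disjoint, use fin dj1 in auto,
        subst sum.union_disjoint, use fin dj2 in auto)
  moreover have "card M = card (M \<inter> S1) + (card (M \<inter> S2) + card (M \<inter> S3))"
    by (subst Meq, subst card_Un_disjoint, use fin dj1 in auto,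
        subst card_Un_disjoint, use fin dj2 in auto)
  ultimately show ?thesis using s1 s2 s3 unfolding mono_deg_def by simp
qed

lemma interval_disj:
  fixes n m p :: nat
  assumes "n \<noteq> m"
  shows "{n*p..<n*p+p} \<inter> {m*p..<m*p+p} = {}"
proof -
  { fix n m :: nat assume "n < m"
    then have "n*p + p \<le> m*p"
      by (metis Suc_leI add.commute mult_Suc mult_le_mono1)
    then have "{n*p..<n*p+p} \<inter> {m*p..<m*p+p} = {}" by auto }
  then show ?thesis using assms
    by (metis Int_commute linorder_neqE_nat)
qed

lemma construct:
  assumes sp: "three_infinite_split S1 S2 S3" and pp: "p > 0"
  shows "\<exists>Mf :: nat \<Rightarrow> nat set. \<forall>n. finite (Mf n) \<and> Mf n \<noteq> {} \<and> card (Mf n \<inter> S1) = p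
     \<and> card (Mf n \<inter> S2) = q \<and> card (Mf n \<inter> S3) = s \<and> (\<forall>m. m \<noteq> n \<longrightarrow> Mf n \<inter> Mf m = {})"
proof -
  have d12: "S1 \<inter> S2 = {}" and d13: "S1 \<inter> S3 = {}"
    and d23: "S2 \<inter> S3 = {}" and i1: "infinite S1" and i2: "infinite S2" and i3: "infinite S3"
    using sp unfolding three_infinite_split_def by auto
  obtain f1 :: "nat \<Rightarrow> nat" where f1: "inj f1" "range f1 \<subseteq> S1" using infinite_countable_subset[OF i1] by blast
  obtain f2 :: "nat \<Rightarrow> nat" where f2: "inj f2" "range f2 \<subseteq> S2" using infinite_countable_subset[OF i2] by blast
  obtain f3 :: "nat \<Rightarrow> nat" where f3: "inj f3" "range f3 \<subseteq> S3" using infinite_countable_subset[OF i3] by blast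
  define I where "I = (\<lambda>(n::nat) (k::nat). {n*k..<n*k+k})"
  define Mf where "Mf = (\<lambda>n. f1 ` I n p \<union> f2 ` I n q \<union> f3 ` I n s)"
  have A1: "f1 ` X \<subseteq> S1" "f2 ` X \<subseteq> S2" "f3 ` X \<subseteq> S3" for X using f1 f2 f3 by auto
  have C12: "f1 ` X \<inter> f2 ` Y = {}" "f2 ` Y \<inter> f1 ` X = {}" for X Y
    using A1(1)[of X] A1(2)[of Y] d12 by blast+
  have C13: "f1 ` X \<inter> f3 ` Y = {}" "f3 ` Y \<inter> f1 ` X = {}" for X Y
    using A1(1)[of X] A1(3)[of Y] d13 by blast+
  have C23: "f2 ` X \<inter> f3 ` Y = {}" "f3 ` Y \<inter> f2 ` X = {}" for X Y
    using A1(2)[of X] A1(3)[of Y] d23 by blast+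
  have B1: "f1 ` X \<inter> S1 = f1 ` X" "f2 ` X \<inter> S1 = {}" "f3 ` X \<inter> S1 = {}" for X
    using A1[of X] d12 d13 by blast+
  have B2: "f1 ` X \<inter> S2 = {}" "f2 ` X \<inter> S2 = f2 ` X" "f3 ` X \<inter> S2 = {}" for X
    using A1[of X] d12 d23 by blast+
  have B3: "f1 ` X \<inter> S3 = {}" "f2 ` X \<inter> S3 = {}" "f3 ` X \<inter> S3 = f3 ` X" for X
    using A1[of X] d13 d23 by blast+
  have "finite (Mf n) \<and> Mf n \<noteq> {} \<and> card (Mf n \<inter> S1) = p
     \<and> card (Mf n \<inter> S2) = q \<and> card (Mf n \<inter> S3) = s \<and> (\<forall>m. m \<noteq> n \<longrightarrow> Mf n \<inter> Mf m = {})" for n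
  proof (intro conjI allI impI)
    show "finite (Mf n)" unfolding Mf_def I_def by simp
    show "Mf n \<noteq> {}" unfolding Mf_def I_def using pp by simp
    have "Mf n \<inter> S1 = f1 ` I n p" unfolding Mf_def by (simp only: Int_Un_distrib2 B1 Un_empty_right)
    then show "card (Mf n \<inter> S1) = p" using f1 unfolding I_def by (simp add: card_image inj_on_subset)
    have "Mf n \<inter> S2 = f2 ` I n q" unfolding Mf_def by (simp only: Int_Un_distrib2 B2 Un_empty_right Un_empty_left)
    then show "card (Mf n \<inter> S2) = q" using f2 unfolding I_def by (simp add: card_image inj_on_subset)
    have "Mf n \<inter> S3 = f3 ` I n s" unfolding Mf_def by (simp only: Int_Un_distrib2 B3 Un_empty_right Un_empty_left)
    then show "card (Mf n \<inter> S3) = s" using f3 unfolding I_def by (simp add: card_image inj_on_subset)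
    fix m assume nm: "m \<noteq> n"
    have e: "I n k \<inter> I m k = {}" for k unfolding I_def using interval_disj nm by (metis)
    have g1: "f1 ` I n p \<inter> f1 ` I m p = {}" using e[of p] f1(1) by (simp add: image_Int[symmetric])
    have g2: "f2 ` I n q \<inter> f2 ` I m q = {}" using e[of q] f2(1) by (simp add: image_Int[symmetric])
    have g3: "f3 ` I n s \<inter> f3 ` I m s = {}" using e[of s] f3(1) by (simp add: image_Int[symmetric])
    show "Mf n \<inter> Mf m = {}" unfolding Mf_def
      by (simp only: Int_Un_distrib Int_Un_distrib2 g1 g2 g3 C12 C13 C23 Un_empty_right Un_empty_left)
  qed
  then show ?thesis by blast
qed


lemma arith:
  fixes a b c r :: int and p0 q0 s0 p1 q1 s1 :: nat
  assumes a: "a > 0" and b: "b > 0" and r: "r = -b*int p0 + c*int q0 + a*int s0" and er: "even r"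
    and one: "1 = -b*int p1 + c*int q1 + a*int s1"
  shows "\<exists>p q s::nat. p > 0 \<and> r = -b*int p + c*int q + a*int s \<and> even (p+q+s)"
proof -
  have "\<exists>pz qz sz :: nat. -b*int pz + c*int qz + a*int sz = 0 \<and> even (p0+q0+s0+pz+qz+sz)"
  proof (cases "even (p0+q0+s0)")
    case True then show ?thesis by (intro exI[of _ 0]) simp
  next
    case odd: False
    have ia: "int (nat a) = a" and ib: "int (nat b) = b" using a b by auto
    show ?thesis
    proof (cases "odd (a+b)")
      case True
      then have "odd (nat a + nat b)" using ia ib by (metis even_of_nat of_nat_add)
      then have "even (p0+q0+s0+nat a+0+nat b)" using odd
        by (metis add.assoc add_0_right even_add)
      moreover have "-b*int (nat a) + c*int 0 + a*int (nat b) = 0" using ia ib by simp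
      ultimately show ?thesis by blast
    next
      case ab: False
      show ?thesis
      proof (cases "c = 0")
        case True
        then have "-b*int 0 + c*int 1 + a*int 0 = 0" by simp
        moreover have "even (p0+q0+s0+0+1+0)" using odd by simp
        ultimately show ?thesis by blast
      next
        case c0: False
        show ?thesis
        proof (cases "c > 0 \<and> odd (b + c)")
          case True
          then have ic: "int (nat c) = c" by simp
          have "odd (nat c + nat b)" using True ic ib by (metis add.commute even_of_nat of_nat_add)
          then have "even (p0+q0+s0+nat c+nat b+0)" using odd
            by (metis add.assoc add_0_right even_add)
          moreover have "-b*int (nat c) + c*int (nat b) + a*int 0 = 0" using ic ib by simp
          ultimately show ?thesis by blast
        next
          case bc: False
          show ?thesis
          proof (cases "c < 0 \<and> odd (a - c)")
            case True
            then have ic: "int (nat (-c)) = -c" by simp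
            have "odd (nat a + nat (-c))" using True ic ia
              by (metis diff_conv_add_uminus even_of_nat of_nat_add)
            then have "even (p0+q0+s0+0+nat a+nat (-c))" using odd
              by (metis add.assoc add_0_right even_add)
            moreover have "-b*int 0 + c*int (nat a) + a*int (nat (-c)) = 0" using ic ia by simp
            ultimately show ?thesis by blast
          next
            case ac: False
            have pab: "even a = even b" using ab by simp
            have pbc: "even b = even c"
            proof (cases "c > 0")
              case True
              then have "even (b + c)" using bc by simp
              then show ?thesis by simp
            next
              case False
              then have "c < 0" using c0 by simp
              then have "even (a - c)" using ac by simp
              then show ?thesis using pab by simp
            qed
            show ?thesis
            proof (cases "even a")
              case True
              then have "even b" "even c" using pab pbc by simp_all
              then have "even (-b*int p1 + c*int q1 + a*int s1)" using True by simp
              then show ?thesis using one by (metis odd_one)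
            next
              case False
              then have "odd b" "odd c" using pab pbc by simp_all
              then have "even r = even (p0+q0+s0)" using False r by (cases "even q0"; cases "even p0"; simp)
              then show ?thesis using er odd by simp
            qed
          qed
        qed
      qed
    qed
  qed
  then obtain pz qz sz :: nat where z: "-b*int pz + c*int qz + a*int sz = 0"
    and par: "even (p0+q0+s0+pz+qz+sz)" by blast
  define p where "p = p0 + pz + 2 * nat a"
  define q where "q = q0 + qz"
  define s where "s = s0 + sz + 2 * nat b"
  have "p > 0" unfolding p_def using a by simp
  moreover have "r = -b*int p + c*int q + a*int s"
    unfolding p_def q_def s_def using a b r z by (simp add: algebra_simps)
  moreover have "even (p+q+s)"
  proof -
    have "p+q+s = (p0+q0+s0+pz+qz+sz) + 2*(nat a + nat b)" unfolding p_def q_def s_def by simp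
    then show ?thesis using par by (metis dvd_add dvd_triv_left)
  qed
  ultimately show ?thesis by blast
qed

lemma witness:
  assumes "full_support (hcomp d :: int \<Rightarrow> (nat set \<Rightarrow> 'k::field) set)"
  shows "\<exists>M. finite M \<and> mono_deg d M = r"
proof -
  have z: "(\<lambda>_. 0 :: 'k) \<in> hcomp d r" unfolding hcomp_def grassmann_def by simp
  have "hcomp d r \<noteq> {(\<lambda>_. 0 :: 'k)}" using assms unfolding full_support_def by blast
  then obtain x :: "nat set \<Rightarrow> 'k" where x: "x \<in> hcomp d r" "x \<noteq> (\<lambda>_. 0)" using z by blast
  then obtain M where "x M \<noteq> 0" by auto
  then show ?thesis using x(1) unfolding hcomp_def grassmann_def by blast
qed

theorem lemma4p7:
  fixes a b c :: int and S1 S2 S3 :: "nat set"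
  assumes "a > 0" and "b > 0" and "-b < c" and "c < a"
    and "three_infinite_split S1 S2 S3"
    and "full_support (hcomp (split_deg S1 S2 S3 (-b) c a) :: int \<Rightarrow> (nat set \<Rightarrow> 'k::field) set)"
  shows "\<forall>r::int. even r \<longrightarrow>
     (\<exists>F. infinite F \<and> pairwise disjnt F \<and>
          (\<forall>M\<in>F. finite M \<and> even (mono_length M) \<and>
               (monomial M :: nat set \<Rightarrow> 'k) \<in> hcomp (split_deg S1 S2 S3 (-b) c a) r))"
proof (intro allI impI)
  fix r :: int assume er: "even r"
  let ?d = "split_deg S1 S2 S3 (-b) c a"
  have sp: "three_infinite_split S1 S2 S3" by fact
  obtain M0 where M0: "finite M0" "mono_deg ?d M0 = r" using witness[OF assms(6)] by blast
  obtain M1 where M1: "finite M1" "mono_deg ?d M1 = 1" using witness[OF assms(6)] by blast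
  have r0: "r = -b*int (card (M0 \<inter> S1)) + c*int (card (M0 \<inter> S2)) + a*int (card (M0 \<inter> S3))"
    using deg_count[OF sp M0(1), of "-b" c a] M0(2) by simp
  have r1: "1 = -b*int (card (M1 \<inter> S1)) + c*int (card (M1 \<inter> S2)) + a*int (card (M1 \<inter> S3))"
    using deg_count[OF sp M1(1), of "-b" c a] M1(2) by simp
  obtain p q s :: nat where pqs: "p > 0" "r = -b*int p + c*int q + a*int s" "even (p+q+s)"
    using arith[OF assms(1,2) r0 er r1] by blast
  obtain Mf :: "nat \<Rightarrow> nat set" where Mf: "\<And>n. finite (Mf n) \<and> Mf n \<noteq> {} \<and> card (Mf n \<inter> S1) = p
     \<and> card (Mf n \<inter> S2) = q \<and> card (Mf n \<inter> S3) = s \<and> (\<forall>m. m \<noteq> n \<longrightarrow> Mf n \<inter> Mf m = {})"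
    using construct[OF sp pqs(1), of q s] by blast
  have inj: "inj Mf"
  proof (rule injI)
    fix n m assume "Mf n = Mf m"
    show "n = m"
    proof (rule ccontr)
      assume "n \<noteq> m"
      then have "Mf n \<inter> Mf m = {}" using Mf[of n] by metis
      then show False using \<open>Mf n = Mf m\<close> Mf[of n] by simp
    qed
  qed
  show "\<exists>F. infinite F \<and> pairwise disjnt F \<and>
          (\<forall>M\<in>F. finite M \<and> even (mono_length M) \<and>
               (monomial M :: nat set \<Rightarrow> 'k) \<in> hcomp ?d r)"
  proof (intro exI[of _ "range Mf"] conjI ballI)
    show "infinite (range Mf)" by (meson finite_imageD infinite_UNIV_nat inj)
    show "pairwise disjnt (range Mf)"
    proof (unfold pairwise_def disjnt_def, intro ballI impI)
      fix X Y assume "X \<in> range Mf" "Y \<in> range Mf" "X \<noteq> Y"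
      then obtain n m where "X = Mf n" "Y = Mf m" "n \<noteq> m" by blast
      then show "X \<inter> Y = {}" using Mf[of m] by blast
    qed
  next
    fix M assume "M \<in> range Mf"
    then obtain n where n: "M = Mf n" by blast
    have fin: "finite M" using Mf n by blast
    have dc: "mono_deg ?d M = r \<and> card M = p + q + s"
      using deg_count[OF sp fin, of "-b" c a] Mf[of n] n pqs(2) by simp
    show "finite M" by fact
    show "even (mono_length M)" using dc pqs(3) unfolding mono_length_def by simp
    have "{N. (monomial M :: nat set \<Rightarrow> 'k) N \<noteq> 0} = {M}" unfolding monomial_def by auto
    then show "(monomial M :: nat set \<Rightarrow> 'k) \<in> hcomp ?d r"
      unfolding hcomp_def grassmann_def using fin dc by (auto simp: monomial_def)
  qed
qed

end
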